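(* Let $f:\mathbb{R}^d\to\mathbb{R}$ be differentiable with $G$-Lipschitz gradient and attain its minimum. Fix $c>0$, $T\ge1$, an initial point $x_1$, and run SGD with gradient clipping $$x_{t+1}=x_t-\alpha\,\mathrm{clip}(\nabla f(x_t)+\xi_t,c),\qquad t=1,\dots,T,$$ with $\alpha=1/\sqrt T$, where, conditionally on $x_t$, the zero-mean noise $\xi_t$ has density $p_t$. For each $t$ let $\tilde p_t$ be any density with $\tilde p_t(\xi)=\tilde p_t(-\xi)$ for all $\xi$ (possibly depending on $x_t$), and define $$b_t:=\int\big\langle\nabla f(x_t),\mathrm{clip}(\nabla f(x_t)+\xi,c)\big\rangle\,(p_t(\xi)-\tilde p_t(\xi))\,d\xi .$$ Then $$\frac1T\sum_{t=1}^T\mathbb{E}\Big[\mathbb{P}_{\xi\sim\tilde p_t}\left(\|\xi\|<\frac c4\right)\min\left\{\|\nabla f(x_t)\|,\frac34c\right\}\|\nabla f(x_t)\|\Big]\le\frac{D_f}{\sqrt T}+\frac{G}{2\sqrt T}c^2-\frac1T\sum_{t=1}^T\mathbb{E}[b_t],$$ where $D_f=f(x_1)-\min_x f(x)$ and the outer expectations are over the random iterates.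
   Context: For $g\in\mathbb{R}^d$ and $c>0$, $\mathrm{clip}(g,c)=g\cdot\min\left(1,\frac{c}{\|g\|}\right)$ (with $\mathrm{clip}(0,c)=0$); $\|\cdot\|$ is the Euclidean norm. $G$-Lipschitz gradient means $\|\nabla f(x)-\nabla f(y)\|\le G\|x-y\|$ for all $x,y$. *)

theory Defs
  imports "HOL-Probability.Probability"
begin

definition clip :: "'a::real_normed_vector \<Rightarrow> real \<Rightarrow> 'a" where
  "clip g c = (if g = 0 then 0 else min 1 (c / norm g) *\<^sub>R g)"

definition sgd_step :: "('a::euclidean_space \<Rightarrow> 'a) \<Rightarrow> real \<Rightarrow> real \<Rightarrow> ('a \<Rightarrow> 'a \<Rightarrow> real) \<Rightarrow> 'a \<Rightarrow> 'a measure" where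
  "sgd_step gradf \<alpha> c q x =
     distr (density lborel (q x)) borel (\<lambda>\<xi>. x - \<alpha> *\<^sub>R clip (gradf x + \<xi>) c)"

text \<open>sgd_dist ... n is the law of the iterate x_(n+1); the noise at time t (1-based)
  has conditional density p t x_t.\<close>
primrec sgd_dist :: "('a::euclidean_space \<Rightarrow> 'a) \<Rightarrow> real \<Rightarrow> real \<Rightarrow> (nat \<Rightarrow> 'a \<Rightarrow> 'a \<Rightarrow> real)
    \<Rightarrow> 'a \<Rightarrow> nat \<Rightarrow> 'a measure" where
  "sgd_dist gradf \<alpha> c p x1 0 = return borel x1"
| "sgd_dist gradf \<alpha> c p x1 (Suc n) = sgd_dist gradf \<alpha> c p x1 n \<bind> sgd_step gradf \<alpha> c (p (Suc n))"

end

theory Submission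
  imports Defs
begin



lemma clip_alt: "clip g c = min 1 (c / norm g) *\<^sub>R g"
  by (simp add: clip_def)

lemma norm_clip_le: assumes "c > 0" shows "norm (clip g c) \<le> c"
proof (cases "g = 0")
  case True then show ?thesis using assms by (simp add: clip_def)
next
  case False
  then have n: "norm g > 0" by simp
  have "norm (clip g c) = min 1 (c / norm g) * norm g"
    using assms n by (simp add: clip_def)
  also have "\<dots> = min (norm g) c" using n by (simp add: min_def field_simps)
  also have "\<dots> \<le> c" by simp
  finally show ?thesis .
qed

lemma clip_measurable[measurable]: "(\<lambda>g::'a::euclidean_space. clip g c) \<in> borel_measurable borel"
  unfolding clip_alt by measurable

lemma lam_norm: assumes "c > 0" shows "min 1 (c / norm (u::'a::real_normed_vector)) * norm u = min (norm u) c"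
proof (cases "u = 0")
  case True then show ?thesis using assms by simp
next
  case False then have "norm u > 0" by simp
  then show ?thesis by (simp add: min_def field_simps)
qed

lemma pair_nonneg:
  fixes g \<xi> :: "'a::real_inner"
  assumes c: "c > 0"
  shows "g \<bullet> clip (g + \<xi>) c + g \<bullet> clip (g - \<xi>) c \<ge> 0"
proof -
  define u where "u = g + \<xi>"
  define v where "v = g - \<xi>"
  define lu where "lu = min 1 (c / norm u)"
  define lv where "lv = min 1 (c / norm v)"
  have lu0: "lu \<ge> 0" "lv \<ge> 0" using c by (auto simp: lu_def lv_def)
  have luu: "lu * norm u = min (norm u) c" "lv * norm v = min (norm v) c"
    using lam_norm[OF c] by (auto simp: lu_def lv_def)
  have "2 * (g \<bullet> clip (g + \<xi>) c + g \<bullet> clip (g - \<xi>) c) = (u + v) \<bullet> (lu *\<^sub>R u + lv *\<^sub>R v)"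
  proof -
    have g2: "u + v = 2 *\<^sub>R g" by (simp add: u_def v_def scaleR_2)
    show ?thesis
      unfolding clip_alt u_def[symmetric] v_def[symmetric] lu_def[symmetric] lv_def[symmetric] g2
      by (simp add: inner_add_right)
  qed
  also have "\<dots> = lu * (norm u)^2 + lv * (norm v)^2 + (lu + lv) * (u \<bullet> v)"
    by (simp add: inner_add_left inner_add_right algebra_simps power2_norm_eq_inner inner_commute)
  also have "\<dots> \<ge> lu * (norm u)^2 + lv * (norm v)^2 - (lu + lv) * (norm u * norm v)"
  proof -
    have "u \<bullet> v \<ge> - (norm u * norm v)" using Cauchy_Schwarz_ineq2[of u v] by simp
    then have "(lu + lv) * (u \<bullet> v) \<ge> (lu + lv) * (- (norm u * norm v))"
      using lu0 by (intro mult_left_mono) auto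
    then show ?thesis by simp
  qed
  also have "lu * (norm u)^2 + lv * (norm v)^2 - (lu + lv) * (norm u * norm v)
      = (lu * norm u - lv * norm v) * (norm u - norm v)"
    by (simp add: algebra_simps power2_eq_square)
  also have "\<dots> \<ge> 0" unfolding luu
    by (cases "norm u \<le> norm v") (auto intro: mult_nonpos_nonpos mult_nonneg_nonneg simp: min_def)
  finally show ?thesis by simp
qed




lemma pair_big_aux:
  fixes g \<xi> :: "'a::real_inner"
  assumes c: "c > 0" and r: "norm \<xi> < c/4" and a: "norm g > 3/4*c" and s: "g \<bullet> \<xi> \<ge> 0"
  shows "g \<bullet> clip (g + \<xi>) c + g \<bullet> clip (g - \<xi>) c \<ge> 3/2 * c * norm g"
proof -
  define u where "u = g + \<xi>"
  define v where "v = g - \<xi>"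
  define lu where "lu = min 1 (c / norm u)"
  define lv where "lv = min 1 (c / norm v)"
  have e1: "g \<bullet> clip (g + \<xi>) c = lu * ((norm g)^2 + g \<bullet> \<xi>)"
    by (simp add: clip_alt lu_def u_def inner_add_right power2_norm_eq_inner)
  have e2: "g \<bullet> clip (g - \<xi>) c = lv * ((norm g)^2 - g \<bullet> \<xi>)"
    by (simp add: clip_alt lv_def v_def inner_diff_right power2_norm_eq_inner)
  have nu: "(norm u)^2 = (norm g)^2 + 2 * (g \<bullet> \<xi>) + (norm \<xi>)^2"
    by (simp add: u_def power2_norm_eq_inner inner_add_left inner_add_right inner_commute)
  have nv: "(norm v)^2 = (norm g)^2 - 2 * (g \<bullet> \<xi>) + (norm \<xi>)^2"
    by (simp add: v_def power2_norm_eq_inner inner_diff_left inner_diff_right inner_commute)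
  have "(norm v)^2 \<le> (norm u)^2" using nu nv s by simp
  then have vu: "norm v \<le> norm u" by (simp add: power2_le_iff_abs_le)
  have "norm v \<ge> norm g - norm \<xi>" unfolding v_def by (metis norm_triangle_ineq2)
  then have v0: "norm v > 0" using r a c by linarith
  have luv: "lu \<le> lv" unfolding lu_def lv_def
    using vu v0 c by (intro min.mono divide_left_mono) (auto intro!: mult_pos_pos)
  have sle: "g \<bullet> \<xi> \<le> norm g * norm \<xi>" by (rule Cauchy_Schwarz_ineq2[THEN abs_le_D1])
  have "norm g * norm \<xi> \<le> norm g * norm g" using r a c by (intro mult_left_mono) auto
  then have s2: "(norm g)^2 - g \<bullet> \<xi> \<ge> 0" using sle by (simp add: power2_eq_square)
  have lu0: "lu \<ge> 0" using c by (simp add: lu_def)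
  have "lv * ((norm g)^2 - g \<bullet> \<xi>) \<ge> lu * ((norm g)^2 - g \<bullet> \<xi>)"
    using luv s2 by (intro mult_right_mono) auto
  then have S: "g \<bullet> clip (g + \<xi>) c + g \<bullet> clip (g - \<xi>) c \<ge> 2 * lu * (norm g)^2"
    unfolding e1 e2 by (simp add: algebra_simps)
  have nule: "norm u \<le> norm g + norm \<xi>" unfolding u_def by (rule norm_triangle_ineq)
  have ag: "norm g > 0" using a c by linarith
  have "2 * lu * (norm g)^2 \<ge> 3/2 * c * norm g"
  proof (cases "c / norm u \<ge> 1")
    case True
    then have "lu = 1" by (simp add: lu_def)
    moreover have "norm g * norm g \<ge> 3/4 * c * norm g" using a ag by (intro mult_right_mono) auto
    ultimately show ?thesis by (simp add: power2_eq_square)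
  next
    case False
    then have "lu = c / norm u" by (simp add: lu_def)
    have u0: "norm u > 0" using vu v0 by linarith
    have "c / norm u \<ge> c / (norm g + norm \<xi>)" using nule u0 c ag by (intro divide_left_mono) (auto intro!: mult_pos_pos add_pos_nonneg)
    moreover have "2 * (c / (norm g + norm \<xi>)) * (norm g)^2 \<ge> 3/2 * c * norm g"
    proof -
      have pos: "norm g + norm \<xi> > 0" using ag by (simp add: add_pos_nonneg)
      have "3/2 * c * norm g * (norm g + norm \<xi>) \<le> 2 * c * (norm g)^2"
      proof -
        have "3 * norm \<xi> \<le> norm g" using r a by linarith
        then have "3/2 * c * norm g * norm \<xi> \<le> 1/2 * c * norm g * norm g"
          using c ag by (simp add: mult_left_mono)
        then show ?thesis by (simp add: algebra_simps power2_eq_square)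
      qed
      then show ?thesis using pos by (simp add: field_simps)
    qed
    ultimately show ?thesis using \<open>lu = c / norm u\<close>
      by (smt (verit, best) mult_right_mono zero_le_power2)
  qed
  with S show ?thesis by linarith
qed

lemma pair_small:
  fixes g \<xi> :: "'a::real_inner"
  assumes c: "c > 0" and r: "norm \<xi> < c/4"
  shows "g \<bullet> clip (g + \<xi>) c + g \<bullet> clip (g - \<xi>) c \<ge> 2 * (min (norm g) (3/4*c) * norm g)"
proof (cases "norm g > 3/4*c")
  case True
  then have m: "min (norm g) (3/4*c) = 3/4*c" by simp
  show ?thesis
  proof (cases "g \<bullet> \<xi> \<ge> 0")
    case True
    then show ?thesis using pair_big_aux[OF c r \<open>norm g > 3/4*c\<close>] m by simp
  next
    case False
    then have "g \<bullet> (-\<xi>) \<ge> 0" by simp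
    from pair_big_aux[OF c _ \<open>norm g > 3/4*c\<close> this] r m show ?thesis by (simp add: add.commute)
  qed
next
  case False
  have cl: "clip w c = w" if "norm w \<le> c" for w :: 'a
  proof (cases "w = 0")
    case False then have "norm w > 0" by simp
    then have "c / norm w \<ge> 1" using that by simp
    then show ?thesis by (simp add: clip_alt)
  qed (simp add: clip_def)
  have "norm (g + \<xi>) \<le> c" using norm_triangle_ineq[of g \<xi>] False r by linarith
  moreover have "norm (g - \<xi>) \<le> c" using norm_triangle_ineq4[of g \<xi>] False r by linarith
  ultimately have "g \<bullet> clip (g + \<xi>) c + g \<bullet> clip (g - \<xi>) c = 2 * (norm g * norm g)"
    using cl by (simp add: inner_add_right inner_diff_right power2_norm_eq_inner[symmetric] power2_eq_square)
  moreover have "min (norm g) (3/4*c) = norm g" using False by simp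
  ultimately show ?thesis by simp
qed




lemma descent:
  fixes f :: "'a::euclidean_space \<Rightarrow> real" and gradf :: "'a \<Rightarrow> 'a"
  assumes grad: "\<And>x. (f has_derivative (\<lambda>h. gradf x \<bullet> h)) (at x)"
    and lip: "\<And>x y. norm (gradf x - gradf y) \<le> G * norm (x - y)"
  shows "f (x + h) \<le> f x + gradf x \<bullet> h + G / 2 * (norm h)^2"
proof -
  define \<phi> where "\<phi> t = f (x + t *\<^sub>R h) - t * (gradf x \<bullet> h) - G / 2 * t^2 * (norm h)^2" for t
  have D: "(\<phi> has_real_derivative (gradf (x + t *\<^sub>R h) \<bullet> h - gradf x \<bullet> h - G * t * (norm h)^2)) (at t)" for t
  proof -
    have d1: "((\<lambda>t. x + t *\<^sub>R h) has_derivative (\<lambda>s. s *\<^sub>R h)) (at t)"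
      by (auto intro!: derivative_eq_intros)
    have d2: "((\<lambda>t. f (x + t *\<^sub>R h)) has_derivative (\<lambda>s. gradf (x + t *\<^sub>R h) \<bullet> (s *\<^sub>R h))) (at t)"
      using diff_chain_at[OF d1 grad] by (simp add: o_def)
    have "(\<lambda>s. gradf (x + t *\<^sub>R h) \<bullet> (s *\<^sub>R h)) = (*) (gradf (x + t *\<^sub>R h) \<bullet> h)"
      by (simp add: fun_eq_iff)
    with d2 have d3: "((\<lambda>t. f (x + t *\<^sub>R h)) has_real_derivative (gradf (x + t *\<^sub>R h) \<bullet> h)) (at t)"
      by (simp add: has_field_derivative_def)
    show ?thesis unfolding \<phi>_def
      by (rule derivative_eq_intros d3 refl)+ (simp add: power2_eq_square algebra_simps)
  qed
  have "\<phi> 1 \<le> \<phi> 0"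
  proof (rule DERIV_nonpos_imp_nonincreasing[of 0 1])
    fix t :: real assume t0: "0 \<le> t" and t1: "t \<le> 1"
    note t = t0 t1
    have "gradf (x + t *\<^sub>R h) \<bullet> h - gradf x \<bullet> h = (gradf (x + t *\<^sub>R h) - gradf x) \<bullet> h"
      by (simp add: inner_diff_left)
    also have "\<dots> \<le> norm (gradf (x + t *\<^sub>R h) - gradf x) * norm h"
      by (rule Cauchy_Schwarz_ineq2[THEN abs_le_D1])
    also have "\<dots> \<le> G * norm (t *\<^sub>R h) * norm h"
      using lip[of "x + t *\<^sub>R h" x] by (intro mult_right_mono) auto
    also have "\<dots> = G * t * (norm h)^2" using t by (simp add: power2_eq_square)
    finally show "\<exists>y. (\<phi> has_real_derivative y) (at t) \<and> y \<le> 0"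
      using D by (intro exI[of _ "gradf (x + t *\<^sub>R h) \<bullet> h - gradf x \<bullet> h - G * t * (norm h)^2"]) auto
  qed simp_all
  then show ?thesis by (simp add: \<phi>_def)
qed




locale sgdloc =
  fixes f :: "'a::euclidean_space \<Rightarrow> real" and gradf :: "'a \<Rightarrow> 'a"
    and G c a :: real and x1 :: 'a
    and p pt :: "nat \<Rightarrow> 'a \<Rightarrow> 'a \<Rightarrow> real"
  assumes grad: "\<And>x. (f has_derivative (\<lambda>h. gradf x \<bullet> h)) (at x)"
    and lip: "\<And>x y. norm (gradf x - gradf y) \<le> G * norm (x - y)"
    and c_pos: "c > 0" and a_pos: "a > 0"
    and p_meas[measurable]: "\<And>t. (\<lambda>(x, \<xi>). p t x \<xi>) \<in> borel_measurable (borel \<Otimes>\<^sub>M borel)"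
    and p_nonneg: "\<And>t x \<xi>. p t x \<xi> \<ge> 0"
    and p_norm: "\<And>t x. (\<integral>\<^sup>+ \<xi>. ennreal (p t x \<xi>) \<partial>lborel) = 1"
    and pt_meas[measurable]: "\<And>t. (\<lambda>(x, \<xi>). pt t x \<xi>) \<in> borel_measurable (borel \<Otimes>\<^sub>M borel)"
    and pt_nonneg: "\<And>t x \<xi>. pt t x \<xi> \<ge> 0"
    and pt_norm: "\<And>t x. (\<integral>\<^sup>+ \<xi>. ennreal (pt t x \<xi>) \<partial>lborel) = 1"
    and pt_sym: "\<And>t x \<xi>. pt t x \<xi> = pt t x (- \<xi>)"
begin

lemma G_nonneg: "G \<ge> 0"
proof -
  have "0 \<le> norm (gradf One - gradf 0)" by simp
  also have "\<dots> \<le> G * norm (One :: 'a)" using lip[of One 0] by simp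
  finally show ?thesis using One_non_0 by (simp add: zero_le_mult_iff)
qed

lemma gradf_cont: "continuous_on UNIV gradf"
proof -
  have "G-lipschitz_on UNIV gradf"
    by (rule lipschitz_onI) (use lip G_nonneg in \<open>auto simp: dist_norm\<close>)
  then show ?thesis by (rule lipschitz_on_continuous_on)
qed

lemma gradf_meas[measurable]: "gradf \<in> borel_measurable borel"
  by (rule borel_measurable_continuous_onI[OF gradf_cont])

lemma f_cont: "continuous_on UNIV f"
  by (intro continuous_at_imp_continuous_on ballI has_derivative_continuous[OF grad])

lemma f_meas[measurable]: "f \<in> borel_measurable borel"
  by (rule borel_measurable_continuous_onI[OF f_cont])

lemma p_meas1[measurable]: "(\<lambda>\<xi>. p t x \<xi>) \<in> borel_measurable borel"
  by measurable

lemma pt_meas1[measurable]: "(\<lambda>\<xi>. pt t x \<xi>) \<in> borel_measurable borel"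
  by measurable

lemma p_int: "integrable lborel (p t x)"
  by (rule integrableI_nonneg) (auto simp: p_nonneg p_norm)

lemma pt_int: "integrable lborel (pt t x)"
  by (rule integrableI_nonneg) (auto simp: pt_nonneg pt_norm)

lemma p_integral: "(\<integral>\<xi>. p t x \<xi> \<partial>lborel) = 1"
  by (subst integral_eq_nn_integral) (auto simp: p_nonneg p_norm)

lemma pt_integral: "(\<integral>\<xi>. pt t x \<xi> \<partial>lborel) = 1"
  by (subst integral_eq_nn_integral) (auto simp: pt_nonneg pt_norm)

definition K :: "nat \<Rightarrow> 'a \<Rightarrow> 'a measure" where "K t = sgd_step gradf a c (p t)"
definition mu :: "nat \<Rightarrow> 'a measure" where "mu n = sgd_dist gradf a c p x1 n"

lemma step_meas[measurable]: "(\<lambda>(x, \<xi>). x - a *\<^sub>R clip (gradf x + \<xi>) c) \<in> borel_measurable (borel \<Otimes>\<^sub>M borel)"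
  by measurable

lemma prob_dens: "prob_space (density lborel (\<lambda>\<xi>. ennreal (p t x \<xi>)))"
proof (rule prob_spaceI)
  show "emeasure (density lborel (\<lambda>\<xi>. ennreal (p t x \<xi>))) (space (density lborel (\<lambda>\<xi>. ennreal (p t x \<xi>)))) = 1"
    by (subst emeasure_density) (auto simp: p_norm)
qed

lemma prob_K: "prob_space (K t x)"
  unfolding K_def sgd_step_def
  by (intro prob_space.prob_space_distr prob_dens) simp

lemma sets_K[simp]: "sets (K t x) = sets borel"
  by (simp add: K_def sgd_step_def)

lemma emeasure_K: "A \<in> sets borel \<Longrightarrow>
  emeasure (K t x) A = (\<integral>\<^sup>+\<xi>. ennreal (p t x \<xi>) * indicator A (x - a *\<^sub>R clip (gradf x + \<xi>) c) \<partial>lborel)"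
  unfolding K_def sgd_step_def
  apply (subst emeasure_distr)
    apply simp
   apply simp
  apply (subst emeasure_density)
    apply simp
   apply measurable
  apply (auto intro!: nn_integral_cong split: split_indicator)
  done

lemma K_meas[measurable]: "K t \<in> borel \<rightarrow>\<^sub>M subprob_algebra borel"
proof (rule measurable_subprob_algebra)
  show "subprob_space (K t x)" for x using prob_K[of t x] by (simp add: prob_space_imp_subprob_space)
  fix A :: "'a set" assume [measurable]: "A \<in> sets borel"
  show "(\<lambda>x. emeasure (K t x) A) \<in> borel_measurable borel"
    by (subst emeasure_K[OF \<open>A \<in> sets borel\<close>]) measurable
qed simp

end



lemma dens_bound:
  fixes q F :: "'a::euclidean_space \<Rightarrow> real"
  assumes q: "integrable lborel q" "\<And>\<xi>. q \<xi> \<ge> 0" "(\<integral>\<xi>. q \<xi> \<partial>lborel) = 1"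
    and F: "F \<in> borel_measurable borel" "\<And>\<xi>. \<bar>F \<xi>\<bar> \<le> C"
  shows "integrable lborel (\<lambda>\<xi>. F \<xi> * q \<xi>)" "\<bar>\<integral>\<xi>. F \<xi> * q \<xi> \<partial>lborel\<bar> \<le> C"
proof -
  have qm: "q \<in> borel_measurable borel" using q(1) by (simp add: borel_measurable_integrable)
  have b: "\<bar>F \<xi> * q \<xi>\<bar> \<le> C * q \<xi>" for \<xi>
    using F(2)[of \<xi>] q(2)[of \<xi>] by (simp add: abs_mult mult_right_mono)
  show i: "integrable lborel (\<lambda>\<xi>. F \<xi> * q \<xi>)"
  proof (rule Bochner_Integration.integrable_bound[where f="\<lambda>\<xi>. C * q \<xi>"])
    show "integrable lborel (\<lambda>\<xi>. C * q \<xi>)" using q by simp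
    show "(\<lambda>\<xi>. F \<xi> * q \<xi>) \<in> borel_measurable lborel" using qm F by simp
    show "AE \<xi> in lborel. norm (F \<xi> * q \<xi>) \<le> norm (C * q \<xi>)"
      using b by (intro AE_I2) (auto intro: order_trans[OF _ abs_ge_self])
  qed
  have "\<bar>\<integral>\<xi>. F \<xi> * q \<xi> \<partial>lborel\<bar> \<le> (\<integral>\<xi>. C * q \<xi> \<partial>lborel)"
    by (rule integral_abs_bound_integral) (use i q b in auto)
  also have "\<dots> = C" using q by simp
  finally show "\<bar>\<integral>\<xi>. F \<xi> * q \<xi> \<partial>lborel\<bar> \<le> C" .
qed

lemma lborel_reflect: "distr lborel borel uminus = (lborel :: 'a::euclidean_space measure)"
proof -
  from lborel_affine[of "-1" "0::'a"] show ?thesis by (simp add: density_1)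
qed

lemma integral_reflect:
  fixes F :: "'a::euclidean_space \<Rightarrow> real"
  assumes "F \<in> borel_measurable borel"
  shows "(\<integral>\<xi>. F (- \<xi>) \<partial>lborel) = (\<integral>\<xi>. F \<xi> \<partial>lborel)"
proof -
  have "(\<integral>\<xi>. F \<xi> \<partial>lborel) = (\<integral>\<xi>. F \<xi> \<partial>distr lborel borel uminus)"
    by (simp add: lborel_reflect)
  also have "\<dots> = (\<integral>\<xi>. F (- \<xi>) \<partial>lborel)"
    by (rule integral_distr) (use assms in auto)
  finally show ?thesis by simp
qed

lemma measure_density_integral:
  fixes q :: "'a::euclidean_space \<Rightarrow> real"
  assumes "q \<in> borel_measurable borel" "\<And>\<xi>. q \<xi> \<ge> 0" "S \<in> sets borel"
  shows "measure (density lborel (\<lambda>\<xi>. ennreal (q \<xi>))) S = (\<integral>\<xi>. indicator S \<xi> * q \<xi> \<partial>lborel)"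
proof -
  have "measure (density lborel (\<lambda>\<xi>. ennreal (q \<xi>))) S = enn2real (\<integral>\<^sup>+\<xi>. ennreal (q \<xi>) * indicator S \<xi> \<partial>lborel)"
    unfolding measure_def using assms by (subst emeasure_density) auto
  also have "\<dots> = (\<integral>\<xi>. indicator S \<xi> * q \<xi> \<partial>lborel)"
    by (rule enn2real_nn_integral_eq_integral) (use assms in \<open>auto split: split_indicator\<close>)
  finally show ?thesis .
qed




context sgdloc begin

lemma mu_0: "mu 0 = return borel x1" by (simp add: mu_def)
lemma mu_Suc: "mu (Suc n) = mu n \<bind> K (Suc n)" by (simp add: mu_def K_def)

lemma mu_props: "prob_space (mu n) \<and> sets (mu n) = sets borel"
proof (induction n)
  case 0 then show ?case by (simp add: mu_0 prob_space_return)
next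
  case (Suc n)
  then have P: "prob_space (mu n)" and S: "sets (mu n) = sets borel" by auto
  have KM: "K (Suc n) \<in> mu n \<rightarrow>\<^sub>M subprob_algebra borel"
    using K_meas by (simp add: measurable_cong_sets[OF S refl])
  have ne: "space (mu n) \<noteq> {}" using P by (simp add: prob_space.not_empty)
  have "prob_space (mu (Suc n))" unfolding mu_Suc
    by (rule prob_space.prob_space_bind[OF P _ KM]) (simp add: prob_K)
  moreover have "sets (mu (Suc n)) = sets borel" unfolding mu_Suc
    by (rule sets_bind[OF _ ne]) simp
  ultimately show ?case by simp
qed

lemma prob_mu: "prob_space (mu n)" using mu_props by blast
lemma sets_mu[simp, measurable_cong]: "sets (mu n) = sets borel" using mu_props by blast
lemma space_mu[simp]: "space (mu n) = UNIV" using sets_eq_imp_space_eq[OF sets_mu[of n]] by simp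

lemma K_meas_mu[measurable]: "K t \<in> mu n \<rightarrow>\<^sub>M subprob_algebra borel"
  using K_meas by (simp add: measurable_cong_sets[OF sets_mu refl])

lemma integral_K:
  fixes F :: "'a \<Rightarrow> real"
  assumes [measurable]: "F \<in> borel_measurable borel"
  shows "(\<integral>y. F y \<partial>K t x) = (\<integral>\<xi>. p t x \<xi> * F (x - a *\<^sub>R clip (gradf x + \<xi>) c) \<partial>lborel)"
  unfolding K_def sgd_step_def
  apply (subst integral_distr)
    apply simp
   apply simp
  apply (subst integral_density)
     apply simp
    apply simp
   apply (simp add: p_nonneg)
  apply simp
  done

lemma AE_K: "AE y in K t x. norm (y - x) \<le> a * c"
proof -
  have "(AE y in K t x. norm (y - x) \<le> a * c) \<longleftrightarrow>
     (AE \<xi> in density lborel (\<lambda>\<xi>. ennreal (p t x \<xi>)). norm ((x - a *\<^sub>R clip (gradf x + \<xi>) c) - x) \<le> a * c)"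
    unfolding K_def sgd_step_def by (rule AE_distr_iff) simp_all
  moreover have "norm ((x - a *\<^sub>R clip (gradf x + \<xi>) c) - x) \<le> a * c" for \<xi>
    using norm_clip_le[OF c_pos, of "gradf x + \<xi>"] a_pos by (simp add: mult_left_mono)
  ultimately show ?thesis by simp
qed

lemma AE_mu: "AE x in mu n. norm (x - x1) \<le> real n * a * c"
proof (induction n)
  case 0 then show ?case unfolding mu_0 by (subst AE_return) auto
next
  case (Suc n)
  have "AE x in mu n. AE y in K (Suc n) x. norm (y - x1) \<le> real (Suc n) * a * c"
    using Suc
  proof eventually_elim
    case (elim x)
    show ?case using AE_K[where t="Suc n" and x=x]
    proof eventually_elim
      case (elim y)
      have "norm (y - x1) \<le> norm (y - x) + norm (x - x1)" by (rule norm_diff_triangle_le[of y x _ x1]) simp_all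
      then show ?case using elim \<open>norm (x - x1) \<le> real n * a * c\<close> by (simp add: algebra_simps)
    qed
  qed
  then show ?case unfolding mu_Suc by (subst AE_bind[OF K_meas_mu]) simp_all
qed

end



context sgdloc begin

definition hh :: "'a \<Rightarrow> 'a \<Rightarrow> real" where "hh x \<xi> = gradf x \<bullet> clip (gradf x + \<xi>) c"
definition Dp :: "nat \<Rightarrow> 'a \<Rightarrow> real" where "Dp t x = (\<integral>\<xi>. hh x \<xi> * p t x \<xi> \<partial>lborel)"
definition fb :: "nat \<Rightarrow> 'a \<Rightarrow> real" where "fb N y = (if y \<in> cball x1 (real N * a * c) then f y else 0)"

lemma hh_meas[measurable]: "(\<lambda>(x, \<xi>). hh x \<xi>) \<in> borel_measurable (borel \<Otimes>\<^sub>M borel)"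
  unfolding hh_def by measurable

lemma hh_meas1[measurable]: "hh x \<in> borel_measurable borel"
  unfolding hh_def by measurable

lemma hh_bound: "\<bar>hh x \<xi>\<bar> \<le> norm (gradf x) * c"
proof -
  have "\<bar>hh x \<xi>\<bar> \<le> norm (gradf x) * norm (clip (gradf x + \<xi>) c)"
    unfolding hh_def by (rule Cauchy_Schwarz_ineq2)
  also have "\<dots> \<le> norm (gradf x) * c" by (intro mult_left_mono norm_clip_le c_pos) simp
  finally show ?thesis .
qed

lemma Dp_meas[measurable]: "Dp t \<in> borel_measurable borel"
  unfolding Dp_def by measurable

lemma Dp_bound: "\<bar>Dp t x\<bar> \<le> norm (gradf x) * c"
  unfolding Dp_def by (rule dens_bound(2)[OF p_int p_nonneg p_integral hh_meas1 hh_bound])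

lemma hh_p_int: "integrable lborel (\<lambda>\<xi>. hh x \<xi> * p t x \<xi>)"
  by (rule dens_bound(1)[OF p_int p_nonneg p_integral hh_meas1 hh_bound])

lemma cont_bounded:
  fixes F :: "'a \<Rightarrow> 'b::real_normed_vector"
  assumes "continuous_on UNIV F"
  shows "\<exists>M\<ge>0. \<forall>y\<in>cball x1 R. norm (F y) \<le> M"
proof -
  have "bounded (F ` cball x1 R)"
    by (intro compact_imp_bounded compact_continuous_image continuous_on_subset[OF assms]) auto
  then obtain M where "\<forall>z\<in>F ` cball x1 R. norm z \<le> M" by (auto simp: bounded_iff)
  then show ?thesis by (intro exI[of _ "max M 0"]) auto
qed

lemma fb_meas[measurable]: "fb N \<in> borel_measurable borel"
proof -
  have [measurable]: "cball x1 (real N * a * c) \<in> sets borel" by simp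
  show ?thesis unfolding fb_def by measurable
qed

lemma fb_bounded: "\<exists>M\<ge>0. \<forall>y. \<bar>fb N y\<bar> \<le> M"
proof -
  obtain M where M: "M \<ge> 0" "\<forall>y\<in>cball x1 (real N * a * c). norm (f y) \<le> M"
    using cont_bounded[OF f_cont] by blast
  then show ?thesis by (intro exI[of _ M]) (auto simp: fb_def)
qed

lemma Dp_int: "integrable (mu n) (Dp t)"
proof -
  obtain M where M: "M \<ge> 0" "\<forall>y\<in>cball x1 (real n * a * c). norm (gradf y) \<le> M"
    using cont_bounded[OF gradf_cont] by blast
  interpret prob_space "mu n" by (rule prob_mu)
  show ?thesis
  proof (rule integrable_const_bound[where B="M * c"])
    show "AE x in mu n. norm (Dp t x) \<le> M * c"
      using AE_mu[of n]
    proof eventually_elim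
      case (elim x)
      then have "norm (gradf x) \<le> M" using M by (auto simp: dist_norm norm_minus_commute)
      then show ?case using Dp_bound[of t x] c_pos by (simp add: mult_right_mono order_trans)
    qed
  qed simp
qed

lemma fb_int: "integrable (mu n) (fb N)"
proof -
  obtain M where M: "M \<ge> 0" "\<forall>y. \<bar>fb N y\<bar> \<le> M" using fb_bounded by blast
  interpret prob_space "mu n" by (rule prob_mu)
  show ?thesis by (rule integrable_const_bound[where B=M]) (use M in auto)
qed

end



context sgdloc begin

lemma step_ineq:
  assumes "n < N"
  shows "(\<integral>x. fb N x \<partial>mu (Suc n)) \<le> (\<integral>x. fb N x \<partial>mu n) - a * (\<integral>x. Dp (Suc n) x \<partial>mu n) + G * a^2 * c^2 / 2"
proof -
  interpret prob_space "mu n" by (rule prob_mu)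
  obtain Mf where Mf: "Mf \<ge> 0" "\<And>y. \<bar>fb N y\<bar> \<le> Mf" using fb_bounded by blast
  define K0 where "K0 = G * a^2 * c^2 / 2"
  define \<Phi> where "\<Phi> x = (\<integral>y. fb N y \<partial>K (Suc n) x)" for x
  have e1: "(\<integral>x. fb N x \<partial>mu (Suc n)) = (\<integral>x. \<Phi> x \<partial>mu n)"
    unfolding mu_Suc \<Phi>_def
  proof (rule integral_bind[where B'=1 and K=borel])
    show "finite_measure (mu n)" by (rule finite_measure_axioms)
    show "AE x in mu n. emeasure (K (Suc n) x) (space (K (Suc n) x)) \<le> ennreal 1"
      by (intro AE_I2) (simp add: prob_space.emeasure_space_1[OF prob_K])
  qed (use Mf in auto)
  have \<Phi>_meas: "\<Phi> \<in> borel_measurable (mu n)"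
    unfolding \<Phi>_def by (rule measurable_compose[OF K_meas_mu integral_measurable_subprob_algebra[OF fb_meas]])
  have \<Phi>_alt: "\<Phi> x = (\<integral>\<xi>. fb N (x - a *\<^sub>R clip (gradf x + \<xi>) c) * p (Suc n) x \<xi> \<partial>lborel)" for x
    unfolding \<Phi>_def by (subst integral_K) (auto simp: mult.commute)
  have \<Phi>_int: "integrable (mu n) \<Phi>"
  proof (rule integrable_const_bound[where B=Mf])
    show "AE x in mu n. norm (\<Phi> x) \<le> Mf"
      unfolding \<Phi>_alt real_norm_def
      by (intro AE_I2 dens_bound(2)[OF p_int p_nonneg p_integral]) (use Mf in auto)
  qed (rule \<Phi>_meas)
  have AE1: "AE x in mu n. \<Phi> x \<le> fb N x - a * Dp (Suc n) x + K0"
    using AE_mu[of n]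
  proof eventually_elim
    case (elim x)
    let ?w = "\<lambda>\<xi>. clip (gradf x + \<xi>) c"
    have xB: "x \<in> cball x1 (real N * a * c)"
    proof -
      have "real n * a * c \<le> real N * a * c" using assms a_pos c_pos by (intro mult_right_mono) auto
      then show ?thesis using elim by (simp add: dist_norm norm_minus_commute)
    qed
    have pt: "fb N (x - a *\<^sub>R ?w \<xi>) * p (Suc n) x \<xi> \<le> (fb N x + K0) * p (Suc n) x \<xi> - a * (hh x \<xi> * p (Suc n) x \<xi>)" for \<xi>
    proof -
      have nw: "norm (?w \<xi>) \<le> c" by (rule norm_clip_le[OF c_pos])
      have inB: "x - a *\<^sub>R ?w \<xi> \<in> cball x1 (real N * a * c)"
      proof -
        have "norm (x - a *\<^sub>R ?w \<xi> - x1) \<le> norm (x - x1) + norm (a *\<^sub>R ?w \<xi>)"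
        proof -
          have "x - a *\<^sub>R ?w \<xi> - x1 = (x - x1) - a *\<^sub>R ?w \<xi>" by (simp add: algebra_simps)
          then show ?thesis by (metis norm_triangle_ineq4)
        qed
        also have "\<dots> \<le> real n * a * c + a * c" using elim nw a_pos by (simp add: mult_left_mono add_mono)
        also have "\<dots> \<le> real N * a * c"
        proof -
          have "real (Suc n) * a * c \<le> real N * a * c"
            using assms a_pos c_pos by (intro mult_right_mono) auto
          then show ?thesis by (simp add: algebra_simps)
        qed
        finally show ?thesis by (simp add: dist_norm norm_minus_commute)
      qed
      have "f (x + (- (a *\<^sub>R ?w \<xi>))) \<le> f x + gradf x \<bullet> (- (a *\<^sub>R ?w \<xi>)) + G / 2 * (norm (- (a *\<^sub>R ?w \<xi>)))^2"
        by (rule descent[OF grad lip])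
      also have "\<dots> = f x - a * hh x \<xi> + G / 2 * (a^2 * (norm (?w \<xi>))^2)"
        using a_pos by (simp add: hh_def power_mult_distrib)
      also have "\<dots> \<le> f x - a * hh x \<xi> + K0"
      proof -
        have "(norm (?w \<xi>))^2 \<le> c^2" using nw by (simp add: power_mono)
        then have "a^2 * (norm (?w \<xi>))^2 \<le> a^2 * c^2" by (simp add: mult_left_mono)
        then have "G / 2 * (a^2 * (norm (?w \<xi>))^2) \<le> G / 2 * (a^2 * c^2)" using G_nonneg by (simp add: mult_left_mono)
        then show ?thesis by (simp add: K0_def)
      qed
      finally have "fb N (x - a *\<^sub>R ?w \<xi>) \<le> fb N x + K0 - a * hh x \<xi>"
        using inB xB by (simp add: fb_def)
      then have "fb N (x - a *\<^sub>R ?w \<xi>) * p (Suc n) x \<xi> \<le> (fb N x + K0 - a * hh x \<xi>) * p (Suc n) x \<xi>"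
        using p_nonneg by (simp add: mult_right_mono)
      then show ?thesis by (simp add: algebra_simps)
    qed
    have i1: "integrable lborel (\<lambda>\<xi>. fb N (x - a *\<^sub>R ?w \<xi>) * p (Suc n) x \<xi>)"
      by (rule dens_bound(1)[OF p_int p_nonneg p_integral]) (use Mf in auto)
    have i2: "integrable lborel (\<lambda>\<xi>. (fb N x + K0) * p (Suc n) x \<xi> - a * (hh x \<xi> * p (Suc n) x \<xi>))"
      using p_int hh_p_int by auto
    have "\<Phi> x \<le> (\<integral>\<xi>. (fb N x + K0) * p (Suc n) x \<xi> - a * (hh x \<xi> * p (Suc n) x \<xi>) \<partial>lborel)"
      unfolding \<Phi>_alt by (rule integral_mono[OF i1 i2 pt])
    also have "\<dots> = (fb N x + K0) - a * Dp (Suc n) x"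
      using p_int hh_p_int by (simp add: p_integral Dp_def)
    finally show ?case by simp
  qed
  have "(\<integral>x. \<Phi> x \<partial>mu n) \<le> (\<integral>x. fb N x - a * Dp (Suc n) x + K0 \<partial>mu n)"
    by (rule integral_mono_AE[OF \<Phi>_int _ AE1]) (use fb_int Dp_int in auto)
  also have "\<dots> = (\<integral>x. fb N x \<partial>mu n) - a * (\<integral>x. Dp (Suc n) x \<partial>mu n) + K0"
    using fb_int Dp_int prob_space by (simp flip: space_mu)
  finally show ?thesis using e1 by (simp add: K0_def)
qed

end



context sgdloc begin

lemma telescope:
  "n \<le> N \<Longrightarrow> (\<integral>x. fb N x \<partial>mu n) \<le> f x1 - a * (\<Sum>t=1..n. \<integral>x. Dp t x \<partial>mu (t - 1)) + real n * (G * a^2 * c^2 / 2)"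
proof (induction n)
  case 0
  have "(\<integral>x. fb N x \<partial>mu 0) = fb N x1" unfolding mu_0 by (rule integral_return) auto
  also have "\<dots> = f x1" using a_pos c_pos by (simp add: fb_def)
  finally show ?case by simp
next
  case (Suc n)
  have "(\<integral>x. fb N x \<partial>mu (Suc n)) \<le> (\<integral>x. fb N x \<partial>mu n) - a * (\<integral>x. Dp (Suc n) x \<partial>mu n) + G * a^2 * c^2 / 2"
    using Suc.prems by (intro step_ineq) simp
  also have "\<dots> \<le> f x1 - a * (\<Sum>t=1..n. \<integral>x. Dp t x \<partial>mu (t - 1)) + real n * (G * a^2 * c^2 / 2)
       - a * (\<integral>x. Dp (Suc n) x \<partial>mu n) + G * a^2 * c^2 / 2"
    using Suc by simp
  also have "\<dots> = f x1 - a * (\<Sum>t=1..Suc n. \<integral>x. Dp t x \<partial>mu (t - 1)) + real (Suc n) * (G * a^2 * c^2 / 2)"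
    by (simp add: sum.cl_ivl_Suc algebra_simps)
  finally show ?case .
qed

lemma Dp_sum_bound:
  assumes minex: "\<exists>x0. \<forall>x. f x0 \<le> f x"
  shows "a * (\<Sum>t=1..N. \<integral>x. Dp t x \<partial>mu (t - 1)) \<le> f x1 - (INF x. f x) + real N * (G * a^2 * c^2 / 2)"
proof -
  interpret prob_space "mu N" by (rule prob_mu)
  have bdd: "bdd_below (range f)" using minex by (auto simp: bdd_below_def)
  have "(\<integral>x. (INF x. f x) \<partial>mu N) \<le> (\<integral>x. fb N x \<partial>mu N)"
  proof (rule integral_mono_AE)
    show "AE x in mu N. (INF x. f x) \<le> fb N x"
      using AE_mu[of N] by eventually_elim (auto simp: fb_def dist_norm norm_minus_commute intro!: cINF_lower bdd)
  qed (auto simp: fb_int)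
  then have "(INF x. f x) \<le> (\<integral>x. fb N x \<partial>mu N)" using prob_space by (simp flip: space_mu)
  with telescope[of N N] show ?thesis by simp
qed

definition Dq :: "nat \<Rightarrow> 'a \<Rightarrow> real" where "Dq t x = (\<integral>\<xi>. hh x \<xi> * pt t x \<xi> \<partial>lborel)"

lemma Dq_meas[measurable]: "Dq t \<in> borel_measurable borel"
  unfolding Dq_def by measurable

lemma Dq_bound: "\<bar>Dq t x\<bar> \<le> norm (gradf x) * c"
  unfolding Dq_def by (rule dens_bound(2)[OF pt_int pt_nonneg pt_integral hh_meas1 hh_bound])

lemma hh_pt_int: "integrable lborel (\<lambda>\<xi>. hh x \<xi> * pt t x \<xi>)"
  by (rule dens_bound(1)[OF pt_int pt_nonneg pt_integral hh_meas1 hh_bound])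

lemma Lt_le_Dq:
  "measure (density lborel (\<lambda>\<xi>. ennreal (pt t x \<xi>))) {\<xi>. norm \<xi> < c / 4}
     * min (norm (gradf x)) (3 / 4 * c) * norm (gradf x) \<le> Dq t x"
proof -
  define S where "S = {\<xi>::'a. norm \<xi> < c / 4}"
  define m where "m = min (norm (gradf x)) (3 / 4 * c) * norm (gradf x)"
  have S[measurable]: "S \<in> sets borel" unfolding S_def by (intro borel_open open_Collect_less) (auto intro: continuous_intros)
  have meas: "measure (density lborel (\<lambda>\<xi>. ennreal (pt t x \<xi>))) S = (\<integral>\<xi>. indicator S \<xi> * pt t x \<xi> \<partial>lborel)"
    by (rule measure_density_integral) (auto simp: pt_nonneg)
  have ib: "\<bar>indicator S \<xi> :: real\<bar> \<le> 1" for \<xi> by (simp split: split_indicator)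
  have iS: "integrable lborel (\<lambda>\<xi>. indicator S \<xi> * pt t x \<xi>)"
    by (rule dens_bound(1)[OF pt_int pt_nonneg pt_integral _ ib]) simp
  have hm: "(\<lambda>\<xi>. hh x (- \<xi>)) \<in> borel_measurable borel" by measurable
  have hb: "\<bar>hh x (- \<xi>)\<bar> \<le> norm (gradf x) * c" for \<xi> by (rule hh_bound)
  have i2: "integrable lborel (\<lambda>\<xi>. hh x (- \<xi>) * pt t x \<xi>)"
    by (rule dens_bound(1)[OF pt_int pt_nonneg pt_integral hm hb])
  have refl: "Dq t x = (\<integral>\<xi>. hh x (- \<xi>) * pt t x \<xi> \<partial>lborel)"
  proof -
    have "Dq t x = (\<integral>\<xi>. hh x (- \<xi>) * pt t x (- \<xi>) \<partial>lborel)"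
      unfolding Dq_def by (rule integral_reflect[symmetric]) measurable
    also have "\<dots> = (\<integral>\<xi>. hh x (- \<xi>) * pt t x \<xi> \<partial>lborel)"
      by (simp flip: pt_sym)
    finally show ?thesis .
  qed
  have pw: "2 * m * (indicator S \<xi> * pt t x \<xi>) \<le> hh x \<xi> * pt t x \<xi> + hh x (- \<xi>) * pt t x \<xi>" for \<xi>
  proof -
    have "2 * m * indicator S \<xi> \<le> hh x \<xi> + hh x (- \<xi>)"
    proof (cases "\<xi> \<in> S")
      case True
      then show ?thesis using pair_small[OF c_pos, of \<xi> "gradf x"]
        by (simp add: S_def m_def hh_def)
    next
      case False
      then show ?thesis using pair_nonneg[OF c_pos, of "gradf x" \<xi>]
        by (simp add: hh_def)
    qed
    then have "2 * m * indicator S \<xi> * pt t x \<xi> \<le> (hh x \<xi> + hh x (- \<xi>)) * pt t x \<xi>"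
      using pt_nonneg by (intro mult_right_mono) auto
    then show ?thesis by (simp add: algebra_simps)
  qed
  have "(\<integral>\<xi>. 2 * m * (indicator S \<xi> * pt t x \<xi>) \<partial>lborel) \<le> (\<integral>\<xi>. hh x \<xi> * pt t x \<xi> + hh x (- \<xi>) * pt t x \<xi> \<partial>lborel)"
    by (rule integral_mono[OF _ _ pw]) (use iS hh_pt_int i2 in auto)
  also have "\<dots> = 2 * Dq t x"
    using hh_pt_int i2 refl by (simp add: Dq_def)
  finally have "2 * m * measure (density lborel (\<lambda>\<xi>. ennreal (pt t x \<xi>))) S \<le> 2 * Dq t x"
    using meas by simp
  then show ?thesis by (simp add: S_def m_def algebra_simps)
qed

end



context sgdloc begin

lemma Dq_int: "integrable (mu n) (Dq t)"
proof -
  obtain M where M: "M \<ge> 0" "\<forall>y\<in>cball x1 (real n * a * c). norm (gradf y) \<le> M"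
    using cont_bounded[OF gradf_cont] by blast
  interpret prob_space "mu n" by (rule prob_mu)
  show ?thesis
  proof (rule integrable_const_bound[where B="M * c"])
    show "AE x in mu n. norm (Dq t x) \<le> M * c"
      using AE_mu[of n]
    proof eventually_elim
      case (elim x)
      then have "norm (gradf x) \<le> M" using M by (auto simp: dist_norm norm_minus_commute)
      then show ?case using Dq_bound[of t x] c_pos by (simp add: mult_right_mono order_trans)
    qed
  qed simp
qed

lemma per_t:
  "(\<integral>x. measure (density lborel (\<lambda>\<xi>. ennreal (pt t x \<xi>))) {\<xi>. norm \<xi> < c / 4}
       * min (norm (gradf x)) (3 / 4 * c) * norm (gradf x) \<partial>mu n)
   \<le> (\<integral>x. Dp t x \<partial>mu n) - (\<integral>x. (\<integral>\<xi>. (gradf x \<bullet> clip (gradf x + \<xi>) c) * (p t x \<xi> - pt t x \<xi>) \<partial>lborel) \<partial>mu n)"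
proof -
  interpret prob_space "mu n" by (rule prob_mu)
  define S where "S = {\<xi>::'a. norm \<xi> < c / 4}"
  have S[measurable]: "S \<in> sets borel" unfolding S_def by (intro borel_open open_Collect_less) (auto intro: continuous_intros)
  define L where "L x = measure (density lborel (\<lambda>\<xi>. ennreal (pt t x \<xi>))) S
       * min (norm (gradf x)) (3 / 4 * c) * norm (gradf x)" for x
  have Lalt: "L = (\<lambda>x. (\<integral>\<xi>. indicator S \<xi> * pt t x \<xi> \<partial>lborel) * min (norm (gradf x)) (3 / 4 * c) * norm (gradf x))"
    unfolding L_def by (intro ext, subst measure_density_integral) (auto simp: pt_nonneg)
  have Lm: "L \<in> borel_measurable (mu n)" unfolding Lalt by measurable
  have L0: "0 \<le> L x" for x unfolding L_def by (intro mult_nonneg_nonneg) (use c_pos in auto)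
  have LD: "L x \<le> Dq t x" for x unfolding L_def S_def by (rule Lt_le_Dq)
  have Lint: "integrable (mu n) L"
  proof (rule Bochner_Integration.integrable_bound[OF Dq_int Lm])
    show "AE x in mu n. norm (L x) \<le> norm (Dq t x)"
      using L0 LD by (intro AE_I2) (auto intro: order_trans[OF _ abs_ge_self])
  qed
  have "(\<integral>x. L x \<partial>mu n) \<le> (\<integral>x. Dq t x \<partial>mu n)"
    by (rule integral_mono[OF Lint Dq_int LD])
  also have "\<dots> = (\<integral>x. Dp t x \<partial>mu n) - (\<integral>x. Dp t x - Dq t x \<partial>mu n)"
    using Dp_int Dq_int by simp
  also have "(\<lambda>x. Dp t x - Dq t x) = (\<lambda>x. (\<integral>\<xi>. (gradf x \<bullet> clip (gradf x + \<xi>) c) * (p t x \<xi> - pt t x \<xi>) \<partial>lborel))"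
  proof
    fix x
    have "(\<integral>\<xi>. (gradf x \<bullet> clip (gradf x + \<xi>) c) * (p t x \<xi> - pt t x \<xi>) \<partial>lborel)
        = (\<integral>\<xi>. hh x \<xi> * p t x \<xi> - hh x \<xi> * pt t x \<xi> \<partial>lborel)"
      by (simp add: hh_def algebra_simps)
    also have "\<dots> = Dp t x - Dq t x"
      using hh_p_int hh_pt_int by (simp add: Dp_def Dq_def)
    finally show "Dp t x - Dq t x = (\<integral>\<xi>. (gradf x \<bullet> clip (gradf x + \<xi>) c) * (p t x \<xi> - pt t x \<xi>) \<partial>lborel)" by simp
  qed
  finally show ?thesis unfolding L_def S_def .
qed

lemma final:
  assumes minex: "\<exists>x0. \<forall>x. f x0 \<le> f x"
  shows "(\<Sum>t = 1..N.
            \<integral>x. measure (density lborel (\<lambda>\<xi>. ennreal (pt t x \<xi>))) {\<xi>. norm \<xi> < c / 4}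
                 * min (norm (gradf x)) (3 / 4 * c) * norm (gradf x)
              \<partial>(sgd_dist gradf a c p x1 (t - 1)))
    \<le> (f x1 - (INF x. f x)) / a + real N * (G * a * c^2 / 2)
      - (\<Sum>t = 1..N.
            \<integral>x. (\<integral>\<xi>. (gradf x \<bullet> clip (gradf x + \<xi>) c) * (p t x \<xi> - pt t x \<xi>) \<partial>lborel)
              \<partial>(sgd_dist gradf a c p x1 (t - 1)))"
proof -
  have "(\<Sum>t = 1..N.
            \<integral>x. measure (density lborel (\<lambda>\<xi>. ennreal (pt t x \<xi>))) {\<xi>. norm \<xi> < c / 4}
                 * min (norm (gradf x)) (3 / 4 * c) * norm (gradf x) \<partial>mu (t - 1))
     \<le> (\<Sum>t = 1..N. (\<integral>x. Dp t x \<partial>mu (t - 1))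
          - (\<integral>x. (\<integral>\<xi>. (gradf x \<bullet> clip (gradf x + \<xi>) c) * (p t x \<xi> - pt t x \<xi>) \<partial>lborel) \<partial>mu (t - 1)))"
    by (intro sum_mono per_t)
  also have "\<dots> = (\<Sum>t = 1..N. \<integral>x. Dp t x \<partial>mu (t - 1))
        - (\<Sum>t = 1..N. \<integral>x. (\<integral>\<xi>. (gradf x \<bullet> clip (gradf x + \<xi>) c) * (p t x \<xi> - pt t x \<xi>) \<partial>lborel) \<partial>mu (t - 1))"
    by (simp add: sum_subtractf)
  also have "(\<Sum>t = 1..N. \<integral>x. Dp t x \<partial>mu (t - 1)) \<le> (f x1 - (INF x. f x)) / a + real N * (G * a * c^2 / 2)"
  proof -
    have "a * (\<Sum>t = 1..N. \<integral>x. Dp t x \<partial>mu (t - 1)) \<le> a * ((f x1 - (INF x. f x)) / a + real N * (G * a * c^2 / 2))"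
    proof -
      have "a * ((f x1 - (INF x. f x)) / a + real N * (G * a * c^2 / 2)) = f x1 - (INF x. f x) + real N * (G * a^2 * c^2 / 2)"
        using a_pos by (simp add: field_simps power2_eq_square)
      then show ?thesis using Dp_sum_bound[OF minex, of N] by simp
    qed
    then show ?thesis using a_pos by simp
  qed
  finally show ?thesis by (simp add: mu_def)
qed

end


theorem corollary1:
  fixes f :: "'a::euclidean_space \<Rightarrow> real" and gradf :: "'a \<Rightarrow> 'a"
    and G c :: real and T :: nat and x1 :: 'a
    and p pt :: "nat \<Rightarrow> 'a \<Rightarrow> 'a \<Rightarrow> real"
  assumes grad: "\<And>x. (f has_derivative (\<lambda>h. gradf x \<bullet> h)) (at x)"
    and lip: "\<And>x y. norm (gradf x - gradf y) \<le> G * norm (x - y)"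
    and minex: "\<exists>x0. \<forall>x. f x0 \<le> f x"
    and c_pos: "c > 0" and T_ge: "T \<ge> 1"
    and p_meas: "\<And>t. (\<lambda>(x, \<xi>). p t x \<xi>) \<in> borel_measurable (borel \<Otimes>\<^sub>M borel)"
    and p_nonneg: "\<And>t x \<xi>. p t x \<xi> \<ge> 0"
    and p_norm: "\<And>t x. (\<integral>\<^sup>+ \<xi>. ennreal (p t x \<xi>) \<partial>lborel) = 1"
    and p_mean_int: "\<And>t x. integrable lborel (\<lambda>\<xi>. p t x \<xi> *\<^sub>R \<xi>)"
    and p_mean: "\<And>t x. (\<integral>\<xi>. p t x \<xi> *\<^sub>R \<xi> \<partial>lborel) = 0"
    and pt_meas: "\<And>t. (\<lambda>(x, \<xi>). pt t x \<xi>) \<in> borel_measurable (borel \<Otimes>\<^sub>M borel)"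
    and pt_nonneg: "\<And>t x \<xi>. pt t x \<xi> \<ge> 0"
    and pt_norm: "\<And>t x. (\<integral>\<^sup>+ \<xi>. ennreal (pt t x \<xi>) \<partial>lborel) = 1"
    and pt_sym: "\<And>t x \<xi>. pt t x \<xi> = pt t x (- \<xi>)"
  shows "(1 / real T) * (\<Sum>t = 1..T.
            \<integral>x. measure (density lborel (pt t x)) {\<xi>. norm \<xi> < c / 4}
                 * min (norm (gradf x)) (3 / 4 * c) * norm (gradf x)
              \<partial>(sgd_dist gradf (1 / sqrt (real T)) c p x1 (t - 1)))
    \<le> (f x1 - (INF x. f x)) / sqrt (real T) + G / (2 * sqrt (real T)) * c\<^sup>2
      - (1 / real T) * (\<Sum>t = 1..T.
            \<integral>x. (\<integral>\<xi>. (gradf x \<bullet> clip (gradf x + \<xi>) c) * (p t x \<xi> - pt t x \<xi>) \<partial>lborel)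
              \<partial>(sgd_dist gradf (1 / sqrt (real T)) c p x1 (t - 1)))"
  proof -
  interpret sgdloc f gradf G c "1 / sqrt (real T)" x1 p pt
  proof (unfold_locales)
    show "0 < 1 / sqrt (real T)" using T_ge by simp
  qed (use grad lip c_pos p_meas p_nonneg p_norm pt_meas pt_nonneg pt_norm pt_sym in auto)
  define s where "s = sqrt (real T)"
  have s0: "s > 0" using T_ge by (simp add: s_def)
  have sT: "real T = s^2" using s_def by simp
  note F = final[OF minex, of T]
  have key: "(1 / real T) * X \<le> D / s + G / (2 * s) * c\<^sup>2 - (1 / real T) * Y"
    if "X \<le> D / (1 / s) + real T * (G * (1 / s) * c^2 / 2) - Y" for X Y D :: real
  proof -
    have "(1 / real T) * X \<le> (1 / real T) * (D / (1 / s) + real T * (G * (1 / s) * c^2 / 2) - Y)"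
      using that T_ge by (intro mult_left_mono) auto
    also have "\<dots> = D / s + G / (2 * s) * c\<^sup>2 - (1 / real T) * Y"
      using s0 unfolding sT by (simp add: field_simps power2_eq_square)
    finally show ?thesis .
  qed
  show ?thesis using key[OF F[folded s_def]] unfolding s_def .
qed

end
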